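(* The approximation ratio $\frac{13}{15}$ of the $\alpha$-pass algorithm for the clique inference problem with nonnegative vertex potentials and Potts clique potential $C(\mathbf{v})=\lambda\sum_{v}n_v(\mathbf{v})^2$, $\lambda>0$, is tight: there is a family of such instances (with $\lambda=1$, indexed by the number of vertices $n$) for which the ratio $F(\hat{\mathbf{v}})/F(\mathbf{v}^* )$ between the score of the assignment $\hat{\mathbf{v}}$ returned by $\alpha$-pass and the optimal score tends to $\frac{13}{15}$ as $n\to\infty$.
   Context: Clique inference problem: there are $n$ vertices $1,\dots,n$, a finite set $V$ of values, real vertex potentials $\psi_{jv}$ ($1\le j\le n$, $v\in V$), and a clique potential $C$ depending only on the counts $n_v(\mathbf{v})=|\{j:v_j=v\}|$. The objective is $F(\mathbf{v})=\sum_{j=1}^n\psi_{jv_j}+C(\mathbf{v})$ over $\mathbf{v}\in V^n$; $\mathbf{v}^*$ is a maximizer. The $\alpha$-pass algorithm: for each $\alpha\in V$, sort the vertices in decreasing order of $\psi_{j\alpha}-\max_{v\neq\alpha}\psi_{jv}$; for each $k\in\{1,\dots,n\}$ form the assignment giving the first $k$ sorted vertices the value $\alpha$ and every other vertex a value $v\ne\alpha$ maximizing $\psi_{jv}$; output the formed assignment with the largest $F$ over all $\alpha$ and $k$. *)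

theory Defs
  imports Complex_Main "HOL-Library.FuncSet"
begin

definition cnt :: "nat \<Rightarrow> (nat \<Rightarrow> nat) \<Rightarrow> nat \<Rightarrow> nat" where
  "cnt n x v = card {j \<in> {0..<n}. x j = v}"

definition score :: "nat \<Rightarrow> nat set \<Rightarrow> (nat \<Rightarrow> nat \<Rightarrow> real) \<Rightarrow> real \<Rightarrow> (nat \<Rightarrow> nat) \<Rightarrow> real" where
  "score n V psi lam x = (\<Sum>j<n. psi j (x j)) + lam * (\<Sum>v\<in>V. (real (cnt n x v))^2)"

definition opt :: "nat \<Rightarrow> nat set \<Rightarrow> (nat \<Rightarrow> nat \<Rightarrow> real) \<Rightarrow> real \<Rightarrow> real" where
  "opt n V psi lam = Max (score n V psi lam ` ({0..<n} \<rightarrow>\<^sub>E V))"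

definition akey :: "nat set \<Rightarrow> (nat \<Rightarrow> nat \<Rightarrow> real) \<Rightarrow> nat \<Rightarrow> nat \<Rightarrow> real" where
  "akey V psi a j = psi j a - Max (psi j ` (V - {a}))"

text \<open>A valid run of the alpha-pass for value a: sig i is the vertex at position i of a
sorting in decreasing order of the key (ties broken arbitrarily), and b j is a value
v /= a maximizing psi j v (ties broken arbitrarily).\<close>
definition valid_run :: "nat \<Rightarrow> nat set \<Rightarrow> (nat \<Rightarrow> nat \<Rightarrow> real) \<Rightarrow> nat \<Rightarrow> (nat \<Rightarrow> nat) \<Rightarrow> (nat \<Rightarrow> nat) \<Rightarrow> bool" where
  "valid_run n V psi a sig b \<longleftrightarrow>
     bij_betw sig {0..<n} {0..<n} \<and>
     (\<forall>i i'. i \<le> i' \<and> i' < n \<longrightarrow> akey V psi a (sig i') \<le> akey V psi a (sig i)) \<and>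
     (\<forall>j<n. b j \<in> V - {a} \<and> psi j (b j) = Max (psi j ` (V - {a})))"

definition formed :: "nat \<Rightarrow> (nat \<Rightarrow> nat) \<Rightarrow> (nat \<Rightarrow> nat) \<Rightarrow> nat \<Rightarrow> (nat \<Rightarrow> nat)" where
  "formed a sig b k = (\<lambda>j. if j \<in> sig ` {0..<k} then a else b j)"

definition candidates :: "nat \<Rightarrow> nat set \<Rightarrow> (nat \<Rightarrow> nat \<Rightarrow> nat) \<Rightarrow> (nat \<Rightarrow> nat \<Rightarrow> nat) \<Rightarrow> (nat \<Rightarrow> nat) set" where
  "candidates n V sigs bs = {formed a (sigs a) (bs a) k | a k. a \<in> V \<and> k \<in> {1..n}}"

definition alpha_pass_output :: "nat \<Rightarrow> nat set \<Rightarrow> (nat \<Rightarrow> nat \<Rightarrow> real) \<Rightarrow> real \<Rightarrow> (nat \<Rightarrow> nat) \<Rightarrow> bool" where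
  "alpha_pass_output n V psi lam x \<longleftrightarrow>
     (\<exists>sigs bs. (\<forall>a\<in>V. valid_run n V psi a (sigs a) (bs a)) \<and>
        x \<in> candidates n V sigs bs \<and>
        (\<forall>y \<in> candidates n V sigs bs. score n V psi lam y \<le> score n V psi lam x))"

end

theory Submission imports Defs begin

definition VV :: "nat \<Rightarrow> nat set" where "VV n = {..<n+3}"
definition PS :: "nat \<Rightarrow> nat \<Rightarrow> nat \<Rightarrow> real" where
  "PS n j v = (if v = j+3 then 4*real n/3 + 1 else if v = j mod 3 then 4*real n/3 else 0)"

lemma t_iff: "(i::nat) < 3 \<Longrightarrow> (t < (n + 2 - i) div 3) = (3*t + i < n)"
proof -
  assume i: "i < 3"
  have "(t < (n + 2 - i) div 3) = (Suc t \<le> (n + 2 - i) div 3)" by (simp only: Suc_le_eq)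
  also have "\<dots> = (Suc t * 3 \<le> n + 2 - i)" by (rule less_eq_div_iff_mult_less_eq) simp
  also have "\<dots> = (3*t + i < n)" using i by auto
  finally show ?thesis .
qed

lemma card_mod3: "i < 3 \<Longrightarrow> card {j \<in> {0..<n}. j mod 3 = i} = (n + 2 - i) div 3"
proof -
  assume i: "i < 3"
  have e: "{j \<in> {0..<n}. j mod 3 = i} = (\<lambda>t. 3*t+i) ` {..<(n + 2 - i) div 3}"
  proof (intro set_eqI iffI)
    fix j assume j: "j \<in> {j \<in> {0..<n}. j mod 3 = i}"
    have dm: "j div 3 * 3 + j mod 3 = j" by (rule div_mult_mod_eq)
    have jm: "j mod 3 = i" using j by simp
    have jd: "j = 3*(j div 3) + i" using dm jm by linarith
    have "j div 3 < (n + 2 - i) div 3" using t_iff[OF i, of "j div 3" n] jd j by simp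
    then show "j \<in> (\<lambda>t. 3*t+i) ` {..<(n + 2 - i) div 3}" using jd by blast
  next
    fix j assume "j \<in> (\<lambda>t. 3*t+i) ` {..<(n + 2 - i) div 3}"
    then obtain t where t: "t < (n + 2 - i) div 3" "j = 3*t+i" by auto
    have "3*t + i < n" using t_iff[OF i, of t n] t(1) by simp
    moreover have "(3*t+i) mod 3 = i" using i by simp
    ultimately show "j \<in> {j \<in> {0..<n}. j mod 3 = i}" using t(2) by simp
  qed
  have "inj_on (\<lambda>t. 3*t+i) {..<(n + 2 - i) div 3}" by (intro inj_onI) simp
  then show ?thesis unfolding e by (simp add: card_image)
qed

lemma sum_cnt:
  assumes "finite V" "\<forall>j<n. x j \<in> V"
  shows "(\<Sum>v\<in>V. cnt n x v) = n"
proof -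
  have "card (\<Union>((\<lambda>v. {j \<in> {0..<n}. x j = v}) ` V)) = (\<Sum>v\<in>V. card {j \<in> {0..<n}. x j = v})"
    by (rule card_UN_disjoint) (use assms in auto)
  moreover have "\<Union>((\<lambda>v. {j \<in> {0..<n}. x j = v}) ` V) = {0..<n}" using assms by auto
  ultimately show ?thesis by (simp add: cnt_def)
qed

lemma sum_cnt_real:
  assumes "finite V" "\<forall>j<n. x j \<in> V"
  shows "(\<Sum>v\<in>V. real (cnt n x v)) = real n"
  using sum_cnt[OF assms] by (metis of_nat_sum)

lemma cnt_le: "cnt n x v \<le> n" unfolding cnt_def
  by (metis (no_types, lifting) card_atLeastLessThan card_mono diff_zero finite_atLeastLessThan mem_Collect_eq subsetI)

lemma ar1:
  fixes n k s :: real
  assumes "1 \<le> k" "k \<le> n" "s \<le> (4*n/3+1) * (n - k + 1)"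
  shows "s + k^2 + (n - k) \<le> 13/9*n^2 + 4*n + 1"
proof -
  have h: "0 \<le> (k-1)*(n-k)" using assms by simp
  have e1: "(k-1)*(n-k) = n*k - k*k - n + k" by (algebra | (simp add: divide_simps; algebra))
  have e2: "(4*n/3+1) * (n - k + 1) = 4/3*(n*n) - 4/3*(n*k) + 4/3*n + n - k + 1" by (algebra | (simp add: divide_simps; algebra))
  have p: "0 \<le> n*k" using assms by simp
  have p2: "0 \<le> n*n" by simp
  have lin: "\<And>NN NK KK. 0 \<le> n \<Longrightarrow> 0 \<le> k \<Longrightarrow> 0 \<le> NK - KK - n + k \<Longrightarrow> s \<le> 4/3*NN - 4/3*NK + 4/3*n + n - k + 1 \<Longrightarrow>
     0 \<le> NK \<Longrightarrow> 0 \<le> NN \<Longrightarrow> s + KK + (n - k) \<le> 13/9*NN + 4*n + 1"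
    by argo
  have n0: "0 \<le> n" "0 \<le> k" using assms(1,2) by linarith+
  show ?thesis unfolding power2_eq_square
    by (rule lin[OF n0 h[unfolded e1] assms(3)[unfolded e2] p p2])
qed

lemma ar2:
  fixes n k s g :: real
  assumes "0 \<le> k" "k \<le> n" "s \<le> 4*n/3 * k" "s \<le> 4*n/3 * g" "3*g \<le> n+2" "0 \<le> n"
  shows "s + (n-k)*(4*n/3+1) + k^2 + (n - k) \<le> 13/9*n^2 + 4*n + 1"
proof -
  have e1: "(n-k)*(4*n/3+1) = 4/3*(n*n) - 4/3*(n*k) + n - k" by (algebra | (simp add: divide_simps; algebra))
  have e2: "4*n/3 * k = 4/3*(n*k)" by (algebra | (simp add: divide_simps; algebra))
  show ?thesis
  proof (cases "3*k \<le> n+2")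
    case True
    have "k*k \<le> ((n+2)/3)*((n+2)/3)"
      using mult_mono[of k "(n+2)/3" k "(n+2)/3"] True assms by simp
    moreover have "((n+2)/3)*((n+2)/3) = (n*n + 4*n + 4)/9" by (algebra | (simp add: divide_simps; algebra))
    ultimately have kk: "k*k \<le> (n*n + 4*n + 4)/9" by simp
    have lin: "\<And>NN NK KK. 0 \<le> n \<Longrightarrow> 0 \<le> k \<Longrightarrow> KK \<le> (NN + 4*n + 4)/9 \<Longrightarrow> s \<le> 4/3*NK \<Longrightarrow>
       s + (4/3*NN - 4/3*NK + n - k) + KK + (n - k) \<le> 13/9*NN + 4*n + 1"
      by argo
    show ?thesis unfolding power2_eq_square e1
      by (rule lin[OF assms(6) assms(1) kk assms(3)[unfolded e2]])
  next
    case False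
    have h: "0 \<le> (k - (n+2)/3)*(n-k)" using False assms by simp
    have e3: "(k - (n+2)/3)*(n-k) = n*k - k*k - (n*n)/3 - 2*n/3 + (n*k)/3 + 2*k/3" by (algebra | (simp add: divide_simps; algebra))
    have "4*n/3*g \<le> 4*n/3*((n+2)/3)" using assms(5,6) by (intro mult_left_mono) auto
    moreover have "4*n/3*((n+2)/3) = 4/9*(n*n) + 8/9*n" by (algebra | (simp add: divide_simps; algebra))
    ultimately have sg: "s \<le> 4/9*(n*n) + 8/9*n" using order.trans[OF assms(4)] by (simp only:)
    have lin: "\<And>NN NK KK. 0 \<le> n \<Longrightarrow> 0 \<le> k \<Longrightarrow> 0 \<le> NK - KK - NN/3 - 2*n/3 + NK/3 + 2*k/3 \<Longrightarrow> s \<le> 4/9*NN + 8/9*n \<Longrightarrow>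
       s + (4/3*NN - 4/3*NK + n - k) + KK + (n - k) \<le> 13/9*NN + 4*n + 1"
      by argo
    show ?thesis unfolding power2_eq_square e1
      by (rule lin[OF assms(6) assms(1) h[unfolded e3] sg])
  qed
qed

lemma ar3:
  fixes n m s1 s2 q :: real
  assumes "0 \<le> m" "m \<le> n" "1 \<le> n"
   "s1 \<le> (4*n/3+1)*m" "s1 \<le> (4*n/3+1)*((n+2)/3)" "s2 \<le> (4*n/3+1)*(n-m)"
   "q \<le> (n-m)*m" "q \<le> (n-m)*(n-m)"
  shows "s1 + s2 + m^2 + q \<le> 5/3*n^2 + 5*n + 5"
proof -
  have e1: "(4*n/3+1)*m = 4/3*(n*m) + m" by (algebra | (simp add: divide_simps; algebra))
  have e2: "(4*n/3+1)*((n+2)/3) = 4/9*(n*n) + 8/9*n + n/3 + 2/3" by (algebra | (simp add: divide_simps; algebra))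
  have e3: "(4*n/3+1)*(n-m) = 4/3*(n*n) - 4/3*(n*m) + n - m" by (algebra | (simp add: divide_simps; algebra))
  have e4: "(n-m)*m = n*m - m*m" by (algebra | (simp add: divide_simps; algebra))
  have e5: "(n-m)*(n-m) = n*n - 2*(n*m) + m*m" by (algebra | (simp add: divide_simps; algebra))
  note A = assms(4)[unfolded e1] assms(5)[unfolded e2] assms(6)[unfolded e3] assms(7)[unfolded e4] assms(8)[unfolded e5]
  have n0: "0 \<le> n" "0 \<le> m" using assms(1,2) by linarith+
  consider "3*m \<le> n" | "n \<le> 3*m" "2*m \<le> n" | "n \<le> 2*m" by linarith
  then show ?thesis
  proof cases
    case 1
    have "n*m \<le> n*(n/3)" using 1 n0 by (intro mult_left_mono) auto
    then have B: "n*m \<le> (n*n)/3" by simp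
    have lin: "\<And>NN NM MM. 0 \<le> n \<Longrightarrow> 0 \<le> m \<Longrightarrow> s1 \<le> 4/3*NM + m \<Longrightarrow> s2 \<le> 4/3*NN - 4/3*NM + n - m \<Longrightarrow> q \<le> NM - MM \<Longrightarrow>
       NM \<le> NN/3 \<Longrightarrow> s1 + s2 + MM + q \<le> 5/3*NN + 5*n + 5"
      by argo
    show ?thesis unfolding power2_eq_square by (rule lin[OF n0 A(1) A(3) A(4) B])
  next
    case 2
    have "n*(n/3) \<le> n*m" using 2 n0 by (intro mult_left_mono) auto
    then have B: "(n*n)/3 \<le> n*m" by simp
    have lin: "\<And>NN NM MM. 0 \<le> n \<Longrightarrow> 0 \<le> m \<Longrightarrow> s1 \<le> 4/9*NN + 8/9*n + n/3 + 2/3 \<Longrightarrow> s2 \<le> 4/3*NN - 4/3*NM + n - m \<Longrightarrow> q \<le> NM - MM \<Longrightarrow>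
       NN/3 \<le> NM \<Longrightarrow> s1 + s2 + MM + q \<le> 5/3*NN + 5*n + 5"
      by argo
    show ?thesis unfolding power2_eq_square by (rule lin[OF n0 A(2) A(3) A(4) B])
  next
    case 3
    have h: "0 \<le> (m - n/2)*(n - m)" using 3 assms by simp
    have e6: "(m - n/2)*(n - m) = n*m - m*m - (n*n)/2 + (n*m)/2" by (algebra | (simp add: divide_simps; algebra))
    have "n*(n/3) \<le> n*m" using 3 n0 by (intro mult_left_mono) auto
    then have B: "(n*n)/3 \<le> n*m" by simp
    have lin: "\<And>NN NM MM. 0 \<le> n \<Longrightarrow> 0 \<le> m \<Longrightarrow> s1 \<le> 4/9*NN + 8/9*n + n/3 + 2/3 \<Longrightarrow> s2 \<le> 4/3*NN - 4/3*NM + n - m \<Longrightarrow> q \<le> NN - 2*NM + MM \<Longrightarrow>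
       NN/3 \<le> NM \<Longrightarrow> 0 \<le> NM - MM - NN/2 + NM/2 \<Longrightarrow> s1 + s2 + MM + q \<le> 5/3*NN + 5*n + 5"
      by argo
    show ?thesis unfolding power2_eq_square by (rule lin[OF n0 A(2) A(3) A(5) B h[unfolded e6]])
  qed
qed

lemma comb_le: "(X::real) = s + Y + Z \<Longrightarrow> Y \<le> Y' \<Longrightarrow> Z \<le> Z1 + Z2 \<Longrightarrow> s + Y' + Z1 + Z2 \<le> B \<Longrightarrow> X \<le> B"
  by linarith

lemma comb2: "(s::real) \<le> P \<Longrightarrow> t \<le> c * P \<Longrightarrow> s + t \<le> P * (c + 1)"
proof -
  assume a: "s \<le> P" "t \<le> c * P"
  have e: "P * (c + 1) = c * P + P" by algebra
  show ?thesis unfolding e using add_mono[OF a(2) a(1)] by (simp add: add.commute)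
qed

lemma PS_nonneg: "0 \<le> PS n j v" by (simp add: PS_def)
lemma PS_le: "PS n j v \<le> 4*real n/3 + 1" by (simp add: PS_def)

lemma sum_PS_group:
  assumes "a < 3"
  shows "(\<Sum>j<n. PS n j a) = real (card {j \<in> {0..<n}. j mod 3 = a}) * (4*real n/3)"
proof -
  have "(\<Sum>j<n. PS n j a) = (\<Sum>j\<in>{0..<n}. if j mod 3 = a then 4*real n/3 else 0)"
    using assms by (auto simp: PS_def atLeast0LessThan intro!: sum.cong)
  also have "\<dots> = (\<Sum>j\<in>{j \<in> {0..<n}. j mod 3 = a}. 4*real n/3)"
    by (rule sum.inter_filter[symmetric]) simp
  also have "\<dots> = real (card {j \<in> {0..<n}. j mod 3 = a}) * (4*real n/3)" by simp
  finally show ?thesis .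
qed

lemma card_grp_le: "a < 3 \<Longrightarrow> 3 * real (card {j \<in> {0..<n}. j mod 3 = a}) \<le> real n + 2"
proof -
  assume a: "a < 3"
  have "3 * card {j \<in> {0..<n}. j mod 3 = a} \<le> n + 2" using card_mod3[OF a, of n] by simp
  then show ?thesis by (metis (mono_tags, lifting) of_nat_add of_nat_le_iff of_nat_mult of_nat_numeral)
qed

lemma card_grp0_ge: "real n \<le> 3 * real (card {j \<in> {0..<n}. j mod 3 = 0})"
proof -
  have "n \<le> 3 * card {j \<in> {0..<n}. j mod 3 = 0}" using card_mod3[of 0 n] by simp
  then show ?thesis by (metis (mono_tags, lifting) of_nat_le_iff of_nat_mult of_nat_numeral)
qed

lemma sum_PS_priv:
  assumes "3 \<le> a"
  shows "(\<Sum>j<n. PS n j a) \<le> 4*real n/3 + 1"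
proof -
  have "(\<Sum>j<n. PS n j a) = (\<Sum>j<n. if j = a - 3 then 4*real n/3 + 1 else 0)"
  proof (rule sum.cong)
    fix j assume "j \<in> {..<n}"
    have "j mod 3 < 3" by simp
    then have "a \<noteq> j mod 3" using assms by linarith
    moreover have "(a = j + 3) = (j = a - 3)" using assms by linarith
    ultimately show "PS n j a = (if j = a - 3 then 4*real n/3 + 1 else 0)" unfolding PS_def by simp
  qed simp
  also have "\<dots> = (if a - 3 \<in> {..<n} then 4*real n/3 + 1 else 0)" by (rule sum.delta) simp
  also have "\<dots> \<le> 4*real n/3 + 1" by simp
  finally show ?thesis .
qed

lemma b_char:
  assumes j: "j < n" and b: "b \<in> VV n - {a}" and bm: "PS n j b = Max (PS n j ` (VV n - {a}))"
  shows "a \<noteq> j+3 \<Longrightarrow> b = j+3" and "a = j+3 \<Longrightarrow> b = j mod 3"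
proof -
  have fin: "finite (PS n j ` (VV n - {a}))" by (simp add: VV_def)
  have mx: "\<And>v. v \<in> VV n - {a} \<Longrightarrow> PS n j v \<le> PS n j b"
    unfolding bm using fin by (intro Max_ge) auto
  show "b = j+3" if "a \<noteq> j+3"
  proof (rule ccontr)
    assume "b \<noteq> j+3"
    then have "PS n j b \<le> 4*real n/3" by (simp add: PS_def)
    moreover have "PS n j (j+3) \<le> PS n j b" using mx[of "j+3"] that j by (auto simp: VV_def)
    ultimately show False by (simp add: PS_def)
  qed
  show "b = j mod 3" if "a = j+3"
  proof (rule ccontr)
    assume "b \<noteq> j mod 3"
    moreover have "b \<noteq> j+3" using b that by auto
    ultimately have "PS n j b = 0" by (simp add: PS_def)
    moreover have "j mod 3 \<in> VV n - {a}"
    proof -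
      have "j mod 3 < 3" by simp
      then show ?thesis using that unfolding VV_def by auto
    qed
    then have "PS n j (j mod 3) \<le> PS n j b" by (rule mx)
    moreover have "PS n j (j mod 3) = 4*real n/3" by (simp add: PS_def)
    moreover have "0 < real n" using j by simp
    ultimately show False by simp
  qed
qed

lemma sq_le_self: "c \<le> (1::nat) \<Longrightarrow> real c ^ 2 \<le> real c"
  by (cases c) auto

lemma cand_upper:
  assumes vr: "valid_run n (VV n) (PS n) a sig b" and aV: "a \<in> VV n" and k: "1 \<le> k" "k \<le> n"
  shows "score n (VV n) (PS n) 1 (formed a sig b k) \<le> 13/9*(real n)^2 + 4*real n + 1"
proof -
  have bij: "bij_betw sig {0..<n} {0..<n}" and bp: "\<forall>j<n. b j \<in> VV n - {a} \<and> PS n j (b j) = Max (PS n j ` (VV n - {a}))"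
    using vr unfolding valid_run_def by auto
  define S where "S = sig ` {0..<k}"
  define x where "x = formed a sig b k"
  have Ssub: "S \<subseteq> {..<n}" using bij_betw_imp_surj_on[OF bij] k unfolding S_def by auto
  have cardS: "card S = k"
  proof -
    have "inj_on sig {0..<k}" using k by (intro inj_on_subset[OF bij_betw_imp_inj_on[OF bij]]) auto
    then show ?thesis unfolding S_def by (simp add: card_image)
  qed
  have xS: "\<And>j. j \<in> S \<Longrightarrow> x j = a" and xN: "\<And>j. j \<notin> S \<Longrightarrow> x j = b j"
    unfolding x_def formed_def S_def by auto
  have xV: "\<forall>j<n. x j \<in> VV n"
  proof (intro allI impI)
    fix j assume "j < n"
    then show "x j \<in> VV n" by (cases "j \<in> S") (use xS xN bp aV in auto)
  qed
  have Sa: "{j \<in> {0..<n}. x j = a} = S"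
  proof
    show "{j \<in> {0..<n}. x j = a} \<subseteq> S"
    proof
      fix j assume j: "j \<in> {j \<in> {0..<n}. x j = a}"
      show "j \<in> S"
      proof (rule ccontr)
        assume "j \<notin> S"
        then have "x j = b j" by (rule xN)
        moreover have "b j \<noteq> a" using bp j by auto
        ultimately show False using j by simp
      qed
    qed
    show "S \<subseteq> {j \<in> {0..<n}. x j = a}" using Ssub xS by auto
  qed
  have cnta: "cnt n x a = k" unfolding cnt_def Sa cardS ..
  have cnt1: "cnt n x v \<le> 1" if "v \<noteq> a" for v
  proof -
    have "\<forall>j1\<in>{j \<in> {0..<n}. x j = v}. \<forall>j2\<in>{j \<in> {0..<n}. x j = v}. j1 = j2"
    proof (intro ballI)
      fix j1 j2 assume j1: "j1 \<in> {j \<in> {0..<n}. x j = v}" and j2: "j2 \<in> {j \<in> {0..<n}. x j = v}"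
      have n1: "j1 \<notin> S" "j2 \<notin> S" using j1 j2 xS that by auto
      have e: "b j1 = v" "b j2 = v" "j1 < n" "j2 < n" using j1 j2 xN n1 by auto
      have p1: "b j1 \<in> VV n - {a}" "PS n j1 (b j1) = Max (PS n j1 ` (VV n - {a}))" using bp e by auto
      have p2: "b j2 \<in> VV n - {a}" "PS n j2 (b j2) = Max (PS n j2 ` (VV n - {a}))" using bp e by auto
      note c1 = b_char[OF e(3) p1] and c2 = b_char[OF e(4) p2]
      have m: "j1 mod 3 < 3" "j2 mod 3 < 3" by simp_all
      show "j1 = j2"
      proof (cases "a = j1+3")
        case True
        then have "b j1 = j1 mod 3" by (rule c1(2))
        show ?thesis
        proof (cases "a = j2+3")
          case True
          then show ?thesis using \<open>a = j1+3\<close> by simp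
        next
          case False
          then have "b j2 = j2 + 3" by (rule c2(1))
          then show ?thesis using \<open>b j1 = j1 mod 3\<close> e m by simp
        qed
      next
        case False
        then have bj1: "b j1 = j1 + 3" by (rule c1(1))
        show ?thesis
        proof (cases "a = j2+3")
          case True
          then have "b j2 = j2 mod 3" by (rule c2(2))
          then show ?thesis using bj1 e m by simp
        next
          case False
          then have "b j2 = j2 + 3" by (rule c2(1))
          then show ?thesis using bj1 e by simp
        qed
      qed
    qed
    then show ?thesis unfolding cnt_def by (simp add: card_le_Suc0_iff_eq)
  qed
  have finV: "finite (VV n)" by (simp add: VV_def)
  have sumc: "(\<Sum>v\<in>VV n. real (cnt n x v)) = real n" by (rule sum_cnt_real[OF finV xV])
  have sumrest: "(\<Sum>v\<in>VV n - {a}. real (cnt n x v)) = real n - real k"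
    using sumc sum.remove[OF finV aV, of "\<lambda>v. real (cnt n x v)"] cnta by simp
  have sq: "(\<Sum>v\<in>VV n. real (cnt n x v) ^ 2) \<le> (real k)^2 + (real n - real k)"
  proof -
    have "(\<Sum>v\<in>VV n. real (cnt n x v) ^ 2) = real (cnt n x a)^2 + (\<Sum>v\<in>VV n - {a}. real (cnt n x v) ^ 2)"
      by (rule sum.remove[OF finV aV])
    moreover have "(\<Sum>v\<in>VV n - {a}. real (cnt n x v) ^ 2) \<le> (\<Sum>v\<in>VV n - {a}. real (cnt n x v))"
      by (rule sum_mono) (use cnt1 sq_le_self in auto)
    ultimately show ?thesis using sumrest cnta by simp
  qed
  define s where "s = (\<Sum>j\<in>S. PS n a a)"
  have psplit: "(\<Sum>j<n. PS n j (x j)) = (\<Sum>j\<in>S. PS n j a) + (\<Sum>j\<in>{..<n} - S. PS n j (b j))"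
  proof -
    have e1: "(\<Sum>j<n. PS n j (x j)) = (\<Sum>j\<in>{..<n} - S. PS n j (x j)) + (\<Sum>j\<in>S. PS n j (x j))"
      by (rule sum.subset_diff[OF Ssub finite_lessThan])
    have e2: "(\<Sum>j\<in>{..<n} - S. PS n j (x j)) = (\<Sum>j\<in>{..<n} - S. PS n j (b j))"
      by (rule sum.cong) (auto simp: xN)
    have e3: "(\<Sum>j\<in>S. PS n j (x j)) = (\<Sum>j\<in>S. PS n j a)"
      by (rule sum.cong) (auto simp: xS)
    show ?thesis unfolding e1 e2 e3 by (rule add.commute)
  qed
  have cardR: "card ({..<n} - S) = n - k" using Ssub cardS by (simp add: card_Diff_subset finite_subset)
  have rest: "(\<Sum>j\<in>{..<n} - S. PS n j (b j)) \<le> (real n - real k) * (4*real n/3 + 1)"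
  proof -
    have "(\<Sum>j\<in>{..<n} - S. PS n j (b j)) \<le> real (card ({..<n} - S)) * (4*real n/3 + 1)"
      by (rule sum_bounded_above) (rule PS_le)
    then show ?thesis using cardR k by (simp add: of_nat_diff)
  qed
  have scoreq: "score n (VV n) (PS n) 1 x = (\<Sum>j\<in>S. PS n j a) + (\<Sum>j\<in>{..<n} - S. PS n j (b j)) + (\<Sum>v\<in>VV n. real (cnt n x v) ^ 2)"
    unfolding score_def psplit by simp
  have kn: "real k \<le> real n" "1 \<le> real k" using k by auto
  show ?thesis
  proof (cases "a < 3")
    case True
    define g where "g = real (card {j \<in> {0..<n}. j mod 3 = a})"
    have s1: "(\<Sum>j\<in>S. PS n j a) \<le> 4*real n/3 * real k"
    proof -
      have "(\<Sum>j\<in>S. PS n j a) \<le> real (card S) * (4*real n/3)"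
        by (rule sum_bounded_above) (use True in \<open>auto simp: PS_def\<close>)
      then show ?thesis using cardS by (simp add: mult.commute)
    qed
    have s2: "(\<Sum>j\<in>S. PS n j a) \<le> 4*real n/3 * g"
    proof -
      have "(\<Sum>j\<in>S. PS n j a) \<le> (\<Sum>j<n. PS n j a)"
        by (rule sum_mono2) (use Ssub PS_nonneg in auto)
      then show ?thesis using sum_PS_group[OF True, of n] unfolding g_def by (simp add: mult.commute)
    qed
    have g3: "3*g \<le> real n + 2" unfolding g_def by (rule card_grp_le[OF True])
    have A: "(\<Sum>j\<in>S. PS n j a) + (real n - real k)*(4*real n/3+1) + (real k)^2 + (real n - real k) \<le> 13/9*(real n)^2 + 4*real n + 1"
      by (rule ar2[OF _ kn(1) s1 s2 g3]) (use kn in auto)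
    have B: "(\<Sum>j\<in>{..<n} - S. PS n j (b j)) \<le> (real n - real k)*(4*real n/3+1)" using rest by simp
    show ?thesis unfolding x_def[symmetric]
      by (rule comb_le[OF scoreq B sq A])
  next
    case False
    have s1: "(\<Sum>j\<in>S. PS n j a) \<le> 4*real n/3 + 1"
    proof -
      have "(\<Sum>j\<in>S. PS n j a) \<le> (\<Sum>j<n. PS n j a)"
        by (rule sum_mono2) (use Ssub PS_nonneg in auto)
      then show ?thesis using sum_PS_priv[of a n] False by simp
    qed
    have C: "(\<Sum>j\<in>S. PS n j a) + (\<Sum>j\<in>{..<n} - S. PS n j (b j)) \<le> (4*real n/3 + 1) * ((real n - real k) + 1)"
      by (rule comb2[OF s1 rest])
    have C': "(\<Sum>j\<in>S. PS n j a) + (\<Sum>j\<in>{..<n} - S. PS n j (b j)) \<le> (4*real n/3 + 1) * (real n - real k + 1)"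
      using C by simp
    have A: "((\<Sum>j\<in>S. PS n j a) + (\<Sum>j\<in>{..<n} - S. PS n j (b j))) + (real k)^2 + (real n - real k) \<le> 13/9*(real n)^2 + 4*real n + 1"
      by (rule ar1[OF kn(2) kn(1) C'])
    show ?thesis unfolding x_def[symmetric]
      by (rule comb_le[OF scoreq order.refl sq]) (use A in \<open>simp add: add.assoc\<close>)
  qed
qed

lemma cand_all0:
  assumes vr: "valid_run n (VV n) (PS n) 0 sig b"
  shows "13/9*(real n)^2 \<le> score n (VV n) (PS n) 1 (formed 0 sig b n)"
proof -
  have bij: "bij_betw sig {0..<n} {0..<n}" using vr unfolding valid_run_def by auto
  define x where "x = formed 0 sig b n"
  have x0: "\<And>j. j < n \<Longrightarrow> x j = 0"
    using bij_betw_imp_surj_on[OF bij] unfolding x_def formed_def by auto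
  have ps: "(\<Sum>j<n. PS n j (x j)) = (\<Sum>j<n. PS n j 0)" by (rule sum.cong) (auto simp: x0)
  define g where "g = real (card {j \<in> {0..<n}. j mod 3 = 0})"
  have ps2: "(\<Sum>j<n. PS n j 0) = g * (4*real n/3)" unfolding g_def by (rule sum_PS_group) simp
  have g: "real n \<le> 3*g" unfolding g_def by (rule card_grp0_ge)
  have "real n * (4*real n/3) \<le> (3*g) * (4*real n/3)" by (rule mult_right_mono[OF g]) simp
  then have gg: "4/9*(real n)^2 \<le> g * (4*real n/3)" by (simp add: power2_eq_square)
  have c0: "cnt n x 0 = n"
  proof -
    have "{j \<in> {0..<n}. x j = 0} = {0..<n}" using x0 by auto
    then show ?thesis unfolding cnt_def by simp
  qed
  have "real (cnt n x 0)^2 \<le> (\<Sum>v\<in>VV n. real (cnt n x v)^2)"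
    by (rule member_le_sum) (auto simp: VV_def)
  then have sq: "(real n)^2 \<le> (\<Sum>v\<in>VV n. real (cnt n x v)^2)" using c0 by simp
  have "score n (VV n) (PS n) 1 x = g * (4*real n/3) + (\<Sum>v\<in>VV n. real (cnt n x v)^2)"
    unfolding score_def ps ps2 by simp
  then show ?thesis unfolding x_def[symmetric] using gg sq by simp
qed

lemma sq3: "((a::real)+b+c)^2 \<le> 3*(a^2+b^2+c^2)"
proof -
  have e: "3*(a^2+b^2+c^2) - (a+b+c)^2 = (a-b)^2+(b-c)^2+(a-c)^2" by algebra
  have "0 \<le> (a-b)^2+(b-c)^2+(a-c)^2" by simp
  then show ?thesis using e by (metis diff_ge_0_iff_ge)
qed

lemma finite_PiE_VV: "finite ({0..<n} \<rightarrow>\<^sub>E VV n)"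
  by (rule finite_PiE) (auto simp: VV_def lessThan_empty_iff)

lemma opt_lower:
  assumes "1 \<le> n"
  shows "5/3*(real n)^2 \<le> opt n (VV n) (PS n) 1"
proof -
  define x where "x = restrict (\<lambda>j. j mod 3) {0..<n}"
  have xin: "x \<in> {0..<n} \<rightarrow>\<^sub>E VV n"
  proof -
    have "\<And>j. j mod 3 < n + 3" by (metis add_lessD1 add.commute mod_less_divisor trans_less_add2 zero_less_numeral)
    then show ?thesis unfolding x_def VV_def by auto
  qed
  have ps: "(\<Sum>j<n. PS n j (x j)) = real n * (4*real n/3)"
  proof -
    have "(\<Sum>j<n. PS n j (x j)) = (\<Sum>j<n. 4*real n/3)"
      by (rule sum.cong) (auto simp: x_def PS_def)
    then show ?thesis by simp
  qed
  have x3: "\<forall>j<n. x j \<in> {..<3}" unfolding x_def by auto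
  have s3: "(\<Sum>v\<in>{..<3}. real (cnt n x v)) = real n" by (rule sum_cnt_real[OF _ x3]) simp
  have "(\<Sum>v\<in>{..<3}. real (cnt n x v)) = real (cnt n x 0) + real (cnt n x 1) + real (cnt n x 2)"
    by (simp add: numeral_3_eq_3 numeral_2_eq_2)
  moreover have "(\<Sum>v\<in>{..<3}. real (cnt n x v)^2) = real (cnt n x 0)^2 + real (cnt n x 1)^2 + real (cnt n x 2)^2"
    by (simp add: numeral_3_eq_3 numeral_2_eq_2)
  ultimately have q3: "(real n)^2 \<le> 3 * (\<Sum>v\<in>{..<3}. real (cnt n x v)^2)"
    using s3 sq3 by metis
  have "(\<Sum>v\<in>{..<3}. real (cnt n x v)^2) \<le> (\<Sum>v\<in>VV n. real (cnt n x v)^2)"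
    by (rule sum_mono2) (auto simp: VV_def)
  then have q: "(real n)^2/3 \<le> (\<Sum>v\<in>VV n. real (cnt n x v)^2)" using q3 by simp
  have "score n (VV n) (PS n) 1 x = real n * (4*real n/3) + (\<Sum>v\<in>VV n. real (cnt n x v)^2)"
    unfolding score_def ps by simp
  moreover have "real n * (4*real n/3) = 4/3 * (real n)^2" by (simp add: power2_eq_square)
  ultimately have "5/3*(real n)^2 \<le> score n (VV n) (PS n) 1 x" using q by simp
  also have "\<dots> \<le> opt n (VV n) (PS n) 1"
    unfolding opt_def using finite_PiE_VV xin by (intro Max_ge) auto
  finally show ?thesis .
qed

lemma score_upper:
  assumes n1: "1 \<le> n" and xV: "\<forall>j<n. x j \<in> VV n"
  shows "score n (VV n) (PS n) 1 x \<le> 5/3*(real n)^2 + 5*real n + 5"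
proof -
  have finV: "finite (VV n)" by (simp add: VV_def)
  have neV: "VV n \<noteq> {}" unfolding VV_def by (metis lessThan_iff empty_iff trans_less_add2 zero_less_numeral)
  define M where "M = Max (cnt n x ` VV n)"
  have "M \<in> cnt n x ` VV n" unfolding M_def using finV neV by (intro Max_in) auto
  then obtain v0 where v0: "v0 \<in> VV n" "cnt n x v0 = M" by (metis imageE)
  have cM: "\<And>v. v \<in> VV n \<Longrightarrow> cnt n x v \<le> M" unfolding M_def using finV by (intro Max_ge) auto
  define m where "m = real M"
  define T where "T = {j \<in> {..<n}. x j = v0}"
  have cardT: "card T = M" using v0 unfolding T_def cnt_def by (simp add: atLeast0LessThan)
  have Tsub: "T \<subseteq> {..<n}" unfolding T_def by auto
  have mn: "M \<le> n" using v0 cnt_le by metis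
  have psplit: "(\<Sum>j<n. PS n j (x j)) = (\<Sum>j\<in>T. PS n j v0) + (\<Sum>j\<in>{..<n} - T. PS n j (x j))"
  proof -
    have e1: "(\<Sum>j<n. PS n j (x j)) = (\<Sum>j\<in>{..<n} - T. PS n j (x j)) + (\<Sum>j\<in>T. PS n j (x j))"
      by (rule sum.subset_diff[OF Tsub finite_lessThan])
    have e3: "(\<Sum>j\<in>T. PS n j (x j)) = (\<Sum>j\<in>T. PS n j v0)"
      by (rule sum.cong) (auto simp: T_def)
    show ?thesis unfolding e1 e3 by (rule add.commute)
  qed
  define s1 where "s1 = (\<Sum>j\<in>T. PS n j v0)"
  define s2 where "s2 = (\<Sum>j\<in>{..<n} - T. PS n j (x j))"
  have P1: "1 \<le> (real n + 2)/3" using n1 by simp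
  have h1: "s1 \<le> (4*real n/3+1)*m"
  proof -
    have "s1 \<le> real (card T) * (4*real n/3+1)" unfolding s1_def by (rule sum_bounded_above) (rule PS_le)
    then show ?thesis using cardT unfolding m_def by (simp add: mult.commute)
  qed
  have h2: "s1 \<le> (4*real n/3+1)*((real n+2)/3)"
  proof -
    have "s1 \<le> (\<Sum>j<n. PS n j v0)" unfolding s1_def by (rule sum_mono2) (use Tsub PS_nonneg in auto)
    moreover have "(\<Sum>j<n. PS n j v0) \<le> (4*real n/3+1)*((real n+2)/3)"
    proof (cases "v0 < 3")
      case True
      define g where "g = real (card {j \<in> {0..<n}. j mod 3 = v0})"
      have "(\<Sum>j<n. PS n j v0) = g * (4*real n/3)" unfolding g_def by (rule sum_PS_group[OF True])
      also have "\<dots> \<le> ((real n+2)/3) * (4*real n/3)"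
        using card_grp_le[OF True, of n] unfolding g_def by (intro mult_right_mono) auto
      also have "\<dots> \<le> ((real n+2)/3) * (4*real n/3 + 1)" by (intro mult_left_mono) auto
      finally show ?thesis by (simp add: mult.commute)
    next
      case False
      have "(\<Sum>j<n. PS n j v0) \<le> 4*real n/3 + 1" using sum_PS_priv[of v0 n] False by simp
      also have "\<dots> = (4*real n/3 + 1) * 1" by simp
      also have "\<dots> \<le> (4*real n/3+1)*((real n+2)/3)" using P1 by (intro mult_left_mono) auto
      finally show ?thesis .
    qed
    ultimately show ?thesis by linarith
  qed
  have h3: "s2 \<le> (4*real n/3+1)*(real n - m)"
  proof -
    have "s2 \<le> real (card ({..<n} - T)) * (4*real n/3+1)" unfolding s2_def by (rule sum_bounded_above) (rule PS_le)
    moreover have "card ({..<n} - T) = n - M" using Tsub cardT by (simp add: card_Diff_subset finite_subset)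
    ultimately show ?thesis using mn unfolding m_def by (simp add: of_nat_diff mult.commute)
  qed
  define q where "q = (\<Sum>v\<in>VV n - {v0}. real (cnt n x v)^2)"
  have sumc: "(\<Sum>v\<in>VV n. real (cnt n x v)) = real n" by (rule sum_cnt_real[OF finV xV])
  have sumrest: "(\<Sum>v\<in>VV n - {v0}. real (cnt n x v)) = real n - m"
    using sumc sum.remove[OF finV v0(1), of "\<lambda>v. real (cnt n x v)"] v0(2) unfolding m_def by simp
  have cle1: "real (cnt n x v) \<le> m" if "v \<in> VV n - {v0}" for v using cM that unfolding m_def by auto
  have cle2: "real (cnt n x v) \<le> real n - m" if "v \<in> VV n - {v0}" for v
  proof -
    have "real (cnt n x v) \<le> (\<Sum>v\<in>VV n - {v0}. real (cnt n x v))"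
      by (rule member_le_sum) (use that finV in auto)
    then show ?thesis using sumrest by simp
  qed
  have h4: "q \<le> (real n - m)*m"
  proof -
    have "q \<le> (\<Sum>v\<in>VV n - {v0}. real (cnt n x v) * m)" unfolding q_def
      by (rule sum_mono) (use cle1 in \<open>auto simp: power2_eq_square intro: mult_left_mono\<close>)
    also have "\<dots> = (real n - m)*m" by (simp only: sum_distrib_right[symmetric] sumrest)
    finally show ?thesis .
  qed
  have h5: "q \<le> (real n - m)*(real n - m)"
  proof -
    have "q \<le> (\<Sum>v\<in>VV n - {v0}. real (cnt n x v) * (real n - m))" unfolding q_def
      by (rule sum_mono) (use cle2 in \<open>auto simp: power2_eq_square intro: mult_left_mono\<close>)
    also have "\<dots> = (real n - m)*(real n - m)" by (simp only: sum_distrib_right[symmetric] sumrest)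
    finally show ?thesis .
  qed
  have sqe: "(\<Sum>v\<in>VV n. real (cnt n x v)^2) = m^2 + q"
    unfolding q_def m_def using sum.remove[OF finV v0(1), of "\<lambda>v. real (cnt n x v)^2"] v0(2) by simp
  have scoreq: "score n (VV n) (PS n) 1 x = s1 + s2 + m^2 + q"
    unfolding score_def psplit s1_def[symmetric] s2_def[symmetric] sqe by simp
  have m0: "0 \<le> m" "m \<le> real n" using mn unfolding m_def by auto
  show ?thesis unfolding scoreq
    by (rule ar3[OF m0 _ h1 h2 h3 h4 h5]) (use n1 in simp)
qed

lemma opt_upper:
  assumes "1 \<le> n"
  shows "opt n (VV n) (PS n) 1 \<le> 5/3*(real n)^2 + 5*real n + 5"
proof -
  have ne: "({0..<n} \<rightarrow>\<^sub>E VV n) \<noteq> {}" by (auto simp: PiE_eq_empty_iff VV_def lessThan_empty_iff)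
  show ?thesis unfolding opt_def
  proof (rule Max.boundedI)
    show "finite (score n (VV n) (PS n) 1 ` ({0..<n} \<rightarrow>\<^sub>E VV n))" using finite_PiE_VV by simp
    show "score n (VV n) (PS n) 1 ` ({0..<n} \<rightarrow>\<^sub>E VV n) \<noteq> {}" using ne by simp
    fix y assume "y \<in> score n (VV n) (PS n) 1 ` ({0..<n} \<rightarrow>\<^sub>E VV n)"
    then obtain x where x: "x \<in> {0..<n} \<rightarrow>\<^sub>E VV n" "y = score n (VV n) (PS n) 1 x" by auto
    have "\<forall>j<n. x j \<in> VV n" using x(1) by (auto simp: PiE_def Pi_def)
    then show "y \<le> 5/3*(real n)^2 + 5*real n + 5" using score_upper[OF assms] x(2) by simp
  qed
qed

lemma exists_output:
  assumes n1: "1 \<le> n"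
  shows "\<exists>x. alpha_pass_output n (VV n) (PS n) 1 x"
proof -
  define xs where "xs a = sort_key (\<lambda>j. - akey (VV n) (PS n) a j) [0..<n]" for a
  define sigs where "sigs a = (\<lambda>i. xs a ! i)" for a
  define bs where "bs a = (\<lambda>j. SOME v. v \<in> VV n - {a} \<and> PS n j v = Max (PS n j ` (VV n - {a})))" for a
  have vr: "\<forall>a\<in>VV n. valid_run n (VV n) (PS n) a (sigs a) (bs a)"
  proof
    fix a assume a: "a \<in> VV n"
    have len: "length (xs a) = n" unfolding xs_def by simp
    have d: "distinct (xs a)" unfolding xs_def by simp
    have st: "{0..<n} = set (xs a)" unfolding xs_def by simp
    have A: "{0..<n} = {..<length (xs a)}" using len by (simp add: atLeast0LessThan)
    have bij: "bij_betw (sigs a) {0..<n} {0..<n}"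
      unfolding sigs_def using bij_betw_nth[OF d A st] by simp
    have so: "sorted (map (\<lambda>j. - akey (VV n) (PS n) a j) (xs a))" unfolding xs_def by (rule sorted_sort_key)
    have mono: "\<forall>i i'. i \<le> i' \<and> i' < n \<longrightarrow> akey (VV n) (PS n) a (sigs a i') \<le> akey (VV n) (PS n) a (sigs a i)"
    proof (intro allI impI)
      fix i i' assume h: "i \<le> i' \<and> i' < n"
      have "map (\<lambda>j. - akey (VV n) (PS n) a j) (xs a) ! i \<le> map (\<lambda>j. - akey (VV n) (PS n) a j) (xs a) ! i'"
        using sorted_nth_mono[OF so] h len by simp
      then show "akey (VV n) (PS n) a (sigs a i') \<le> akey (VV n) (PS n) a (sigs a i)"
        using h len unfolding sigs_def by simp
    qed
    have bsp: "\<forall>j<n. bs a j \<in> VV n - {a} \<and> PS n j (bs a j) = Max (PS n j ` (VV n - {a}))"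
    proof (intro allI impI)
      fix j assume "j < n"
      have fin: "finite (PS n j ` (VV n - {a}))" by (simp add: VV_def)
      have "0 \<in> VV n" "1 \<in> VV n" by (simp_all add: VV_def)
      then have ne: "VV n - {a} \<noteq> {}" by auto
      have "Max (PS n j ` (VV n - {a})) \<in> PS n j ` (VV n - {a})" using fin ne by (intro Max_in) auto
      then have "\<exists>v. v \<in> VV n - {a} \<and> PS n j v = Max (PS n j ` (VV n - {a}))" by force
      then show "bs a j \<in> VV n - {a} \<and> PS n j (bs a j) = Max (PS n j ` (VV n - {a}))"
        unfolding bs_def by (rule someI_ex)
    qed
    show "valid_run n (VV n) (PS n) a (sigs a) (bs a)" unfolding valid_run_def using bij mono bsp by blast
  qed
  define C where "C = candidates n (VV n) sigs bs"
  have Csub: "C \<subseteq> (\<lambda>(a,k). formed a (sigs a) (bs a) k) ` (VV n \<times> {1..n})"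
    unfolding C_def candidates_def by auto
  have finC: "finite C" by (rule finite_subset[OF Csub]) (simp add: VV_def)
  have "formed 0 (sigs 0) (bs 0) n \<in> C" unfolding C_def candidates_def using n1 by (fastforce simp: VV_def)
  then have neC: "C \<noteq> {}" by auto
  have "Max (score n (VV n) (PS n) 1 ` C) \<in> score n (VV n) (PS n) 1 ` C" using finC neC by (intro Max_in) auto
  then obtain x where x: "x \<in> C" "score n (VV n) (PS n) 1 x = Max (score n (VV n) (PS n) 1 ` C)" by force
  have mx: "\<forall>y\<in>C. score n (VV n) (PS n) 1 y \<le> score n (VV n) (PS n) 1 x"
  proof
    fix y assume "y \<in> C"
    then show "score n (VV n) (PS n) 1 y \<le> score n (VV n) (PS n) 1 x" unfolding x(2) using finC by (intro Max_ge) auto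
  qed
  show ?thesis unfolding alpha_pass_output_def using vr x(1) mx unfolding C_def by blast
qed

lemma ratio_limit:
  fixes s t :: "nat \<Rightarrow> real"
  assumes H: "\<forall>n\<ge>1. 13/9*(real n)^2 \<le> s n \<and> s n \<le> 13/9*(real n)^2 + 4*real n + 1 \<and>
      5/3*(real n)^2 \<le> t n \<and> t n \<le> 5/3*(real n)^2 + 5*real n + 5"
  shows "(\<lambda>n. s n / t n) \<longlonglongrightarrow> 13/15"
proof (rule tendsto_sandwich)
  show "\<forall>\<^sub>F n in sequentially. (13/9*(real n)^2)/(5/3*(real n)^2 + 5*real n + 5) \<le> s n / t n"
    unfolding eventually_sequentially
  proof (intro exI allI impI)
    fix n :: nat assume n: "1 \<le> n"
    have h: "13/9*(real n)^2 \<le> s n" "s n \<le> 13/9*(real n)^2 + 4*real n + 1" "5/3*(real n)^2 \<le> t n" "t n \<le> 5/3*(real n)^2 + 5*real n + 5"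
      using H n by auto
    have p: "0 < 5/3*(real n)^2" using n by simp
    have "0 \<le> 13/9*(real n)^2" by simp
    then have s0: "0 \<le> s n" using h(1) by linarith
    have t0: "0 < t n" using p h(3) by linarith
    show "(13/9*(real n)^2)/(5/3*(real n)^2 + 5*real n + 5) \<le> s n / t n"
      by (rule frac_le[OF s0 h(1) t0 h(4)])
  qed
  show "\<forall>\<^sub>F n in sequentially. s n / t n \<le> (13/9*(real n)^2 + 4*real n + 1)/(5/3*(real n)^2)"
    unfolding eventually_sequentially
  proof (intro exI allI impI)
    fix n :: nat assume n: "1 \<le> n"
    have h: "13/9*(real n)^2 \<le> s n" "s n \<le> 13/9*(real n)^2 + 4*real n + 1" "5/3*(real n)^2 \<le> t n" "t n \<le> 5/3*(real n)^2 + 5*real n + 5"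
      using H n by auto
    have p: "0 < 5/3*(real n)^2" using n by simp
    have c0: "0 \<le> 13/9*(real n)^2 + 4*real n + 1" by simp
    show "s n / t n \<le> (13/9*(real n)^2 + 4*real n + 1)/(5/3*(real n)^2)"
      by (rule frac_le[OF c0 h(2) p h(3)])
  qed
  have l1: "(\<lambda>n. (13/9)/(5/3 + 5*(1/real n) + 5*(1/real n)^2)) \<longlonglongrightarrow> (13/9)/(5/3 + 5*0 + 5*0^2)"
    by (intro tendsto_intros) auto
  have e1: "\<forall>\<^sub>F n in sequentially. (13/9)/(5/3 + 5*(1/real n) + 5*(1/real n)^2) = (13/9*(real n)^2)/(5/3*(real n)^2 + 5*real n + 5)"
    unfolding eventually_sequentially
  proof (intro exI allI impI)
    fix n :: nat assume n: "1 \<le> n"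
    then have "real n \<noteq> 0" by simp
    then show "(13/9)/(5/3 + 5*(1/real n) + 5*(1/real n)^2) = (13/9*(real n)^2)/(5/3*(real n)^2 + 5*real n + 5)"
      by (simp add: field_simps power2_eq_square)
  qed
  show "(\<lambda>n. (13/9*(real n)^2)/(5/3*(real n)^2 + 5*real n + 5)) \<longlonglongrightarrow> 13/15"
    using Lim_transform_eventually[OF l1 e1] by simp
  have l2: "(\<lambda>n. (13/9 + 4*(1/real n) + (1/real n)^2)/(5/3)) \<longlonglongrightarrow> (13/9 + 4*0 + 0^2)/(5/3)"
    by (intro tendsto_intros) auto
  have e2: "\<forall>\<^sub>F n in sequentially. (13/9 + 4*(1/real n) + (1/real n)^2)/(5/3) = (13/9*(real n)^2 + 4*real n + 1)/(5/3*(real n)^2)"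
    unfolding eventually_sequentially
  proof (intro exI allI impI)
    fix n :: nat assume n: "1 \<le> n"
    then have "real n \<noteq> 0" by simp
    then show "(13/9 + 4*(1/real n) + (1/real n)^2)/(5/3) = (13/9*(real n)^2 + 4*real n + 1)/(5/3*(real n)^2)"
      by (simp add: field_simps power2_eq_square)
  qed
  show "(\<lambda>n. (13/9*(real n)^2 + 4*real n + 1)/(5/3*(real n)^2)) \<longlonglongrightarrow> 13/15"
    using Lim_transform_eventually[OF l2 e2] by simp
qed

theorem theorem5:
  shows "\<exists>(V :: nat \<Rightarrow> nat set) (psi :: nat \<Rightarrow> nat \<Rightarrow> nat \<Rightarrow> real).
    (\<forall>n. finite (V n) \<and> card (V n) \<ge> 2 \<and> (\<forall>j<n. \<forall>v\<in>V n. psi n j v \<ge> 0)) \<and>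
    (\<forall>n\<ge>1. \<exists>x. alpha_pass_output n (V n) (psi n) 1 x) \<and>
    (\<forall>xhat :: nat \<Rightarrow> nat \<Rightarrow> nat.
       (\<forall>n\<ge>1. alpha_pass_output n (V n) (psi n) 1 (xhat n)) \<longrightarrow>
       (\<lambda>n. score n (V n) (psi n) 1 (xhat n) / opt n (V n) (psi n) 1) \<longlonglongrightarrow> 13 / 15)"
proof -
  have P1: "\<forall>n. finite (VV n) \<and> card (VV n) \<ge> 2 \<and> (\<forall>j<n. \<forall>v\<in>VV n. PS n j v \<ge> 0)"
    by (simp add: VV_def PS_nonneg)
  have P2: "\<forall>n\<ge>1. \<exists>x. alpha_pass_output n (VV n) (PS n) 1 x" using exists_output by blast
  have P3: "(\<lambda>n. score n (VV n) (PS n) 1 (xhat n) / opt n (VV n) (PS n) 1) \<longlonglongrightarrow> 13 / 15"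
    if H: "\<forall>n\<ge>1. alpha_pass_output n (VV n) (PS n) 1 (xhat n)" for xhat :: "nat \<Rightarrow> nat \<Rightarrow> nat"
  proof (rule ratio_limit)
    show "\<forall>n\<ge>1. 13/9*(real n)^2 \<le> score n (VV n) (PS n) 1 (xhat n) \<and>
       score n (VV n) (PS n) 1 (xhat n) \<le> 13/9*(real n)^2 + 4*real n + 1 \<and>
       5/3*(real n)^2 \<le> opt n (VV n) (PS n) 1 \<and> opt n (VV n) (PS n) 1 \<le> 5/3*(real n)^2 + 5*real n + 5"
    proof (intro allI impI conjI)
      fix n :: nat assume n: "1 \<le> n"
      obtain sigs bs where vr: "\<forall>a\<in>VV n. valid_run n (VV n) (PS n) a (sigs a) (bs a)"
        and xin: "xhat n \<in> candidates n (VV n) sigs bs"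
        and mx: "\<forall>y\<in>candidates n (VV n) sigs bs. score n (VV n) (PS n) 1 y \<le> score n (VV n) (PS n) 1 (xhat n)"
        using H n unfolding alpha_pass_output_def by blast
      from xin obtain a k where ak: "xhat n = formed a (sigs a) (bs a) k" "a \<in> VV n" "k \<in> {1..n}"
        unfolding candidates_def by blast
      have v0: "0 \<in> VV n" by (simp add: VV_def)
      show "score n (VV n) (PS n) 1 (xhat n) \<le> 13/9*(real n)^2 + 4*real n + 1"
        unfolding ak(1) using cand_upper[OF bspec[OF vr ak(2)] ak(2)] ak(3) by auto
      have "formed 0 (sigs 0) (bs 0) n \<in> candidates n (VV n) sigs bs"
        unfolding candidates_def mem_Collect_eq using n v0 by (intro exI[of _ 0] exI[of _ n]) auto
      then have "score n (VV n) (PS n) 1 (formed 0 (sigs 0) (bs 0) n) \<le> score n (VV n) (PS n) 1 (xhat n)"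
        using mx by blast
      then show "13/9*(real n)^2 \<le> score n (VV n) (PS n) 1 (xhat n)"
        using cand_all0[OF bspec[OF vr v0]] by linarith
      show "5/3*(real n)^2 \<le> opt n (VV n) (PS n) 1" by (rule opt_lower[OF n])
      show "opt n (VV n) (PS n) 1 \<le> 5/3*(real n)^2 + 5*real n + 5" by (rule opt_upper[OF n])
    qed
  qed
  show ?thesis
    by (rule exI[of _ VV], rule exI[of _ PS]) (use P1 P2 P3 in blast)
qed

end
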